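(* Let $I^h\subset\mathbb{K}[S_M^h]$ be a homogeneous ideal, $G$ a sparse Gröbner basis of $I^h$ with respect to $\prec_h$ consisting of homogeneous polynomials, and $D\in\mathbb{N}$. Let $\mathcal{N}$ be the set of monomials $X^{(s,D)}\in\mathbb{K}[S_M^h]_D$ for which some $g\in G$ satisfies $\mathrm{LM}_{\prec_h}(g)\mid_\delta X^{(s,D)}$. Associate to each $X^{(s,D)}\in\mathcal{N}$ exactly one such $g$, and let $\mathcal{R}$ be the set of polynomials $X^t\cdot g$, where $X^{(s,D)}\in\mathcal{N}$, $g$ is its associated polynomial and $X^t$ is the monomial with $X^t\cdot\mathrm{LM}_{\prec_h}(g)=X^{(s,D)}$ and $\delta(X^t)+\delta(\mathrm{LM}_{\prec_h}(g))=\delta(X^{(s,D)})$. Let $\mathcal{M}'_D$ be the Macaulay matrix with columns indexed by all monomials of $\mathbb{K}[S_M^h]_D$ in decreasing order for $\prec_h$ and rows indexed by $\mathcal{R}$, and let $\mathcal{M}_D$ be the Macaulay matrix with the same columns and rows indexed by all products $X^{(u,D-\deg g)}\cdot g$ with $g\in G$ and $X^{(u,D-\deg g)}$ a monomial of $\mathbb{K}[S_M^h]_{D-\deg g}$. Let $\widetilde{\mathcal{M}'_D}$ and $\widetilde{\mathcal{M}_D}$ be their reduced row echelon forms. Then $\mathrm{Rows}(\widetilde{\mathcal{M}'_D})=\mathrm{Rows}(\widetilde{\mathcal{M}_D})$. Moreover, $\mathcal{M}'_D$ is full-rank and in row echelon form.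
   Context: Let $\mathbb{K}$ be a field of characteristic $0$, $M\subset\mathbb{R}^n$ a polytope with $0\in M$, $S_M\subset\mathbb{Z}^n$ the affine semigroup generated by $M\cap\mathbb{Z}^n$ and $S_M^h\subset\mathbb{Z}^{n+1}$ the one generated by $\{(s,1):s\in M\cap\mathbb{Z}^n\}$, both assumed pointed. $\mathbb{K}[S]$ is the semigroup algebra with monomials $X^s$, $X^sX^t=X^{s+t}$; $\mathbb{K}[S_M^h]$ is graded by $\deg X^{(s,d)}=d$, $\mathbb{K}[S_M^h]_d$ is the degree-$d$ part, and "homogeneous" refers to this grading. $\chi:\mathbb{K}[S_M^h]\to\mathbb{K}[S_M]$, $X^{(s,d)}\mapsto X^s$. The affine degree $\delta^A(X^s)$ is the least $d$ with $(s,d)\in S_M^h$, extended to polynomials by the maximum over the support; the sparse degree of $f\in\mathbb{K}[S_M^h]$ is $\delta(f)=\delta^A(\chi(f))$. Fix a monomial order $<_M$ on $\mathbb{K}[S_M]$; the sparse order is $X^s\prec X^r$ iff $\delta^A(X^s)<\delta^A(X^r)$, or equality and $X^s<_MX^r$; the graded sparse order is $X^{(s,d)}\prec_hX^{(r,d')}$ iff $d<d'$, or $d=d'$ and $X^s\prec X^r$. Divisibility: $X^{(s,d_s)}\mid_\delta X^{(r,d_r)}$ if some monomial $X^{(t,d_t)}$ satisfies $X^{(s,d_s)}X^{(t,d_t)}=X^{(r,d_r)}$ and $\delta(X^{(s,d_s)})+\delta(X^{(t,d_t)})=\delta(X^{(r,d_r)})$. A sparse Gröbner basis of $I^h$ w.r.t.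 $\prec_h$ is a subset of $I^h$ generating $I^h$ such that every nonzero $f\in I^h$ has some element $g$ of it with $\mathrm{LM}_{\prec_h}(g)\mid_\delta\mathrm{LM}_{\prec_h}(f)$. A Macaulay matrix has columns indexed by monomials (containing all monomials in the supports of the row polynomials) and rows indexed by polynomials; the entry at (row $f$, column $m$) is the coefficient of $m$ in $f$. $\mathrm{Rows}(\mathcal{M})$ is the set of nonzero polynomials represented by the rows of $\mathcal{M}$. *)

theory Defs
  imports "HOL-Library.Poly_Mapping" "HOL-Library.Function_Algebras" "HOL-Library.Product_Plus"
    "Jordan_Normal_Form.Gauss_Jordan_Elimination"
begin

text \<open>Points of Z^n are functions 'n => int (with 'n a finite index type), points of R^n are
  functions 'n => real.  Points of Z^(n+1) are pairs (s, d) with s in Z^n and d in Z.\<close>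

definition polytope :: "('n::finite \<Rightarrow> real) set \<Rightarrow> bool" where
  "polytope M \<longleftrightarrow> (\<exists>V. finite V \<and>
     M = {x. \<exists>u. (\<forall>v\<in>V. 0 \<le> u v) \<and> sum u V = 1 \<and> x = (\<lambda>i. \<Sum>v\<in>V. u v * v i)})"

definition lattice_pts :: "('n::finite \<Rightarrow> real) set \<Rightarrow> ('n \<Rightarrow> int) set" where
  "lattice_pts M = {s. (\<lambda>i. real_of_int (s i)) \<in> M}"

inductive_set gen_sg :: "'a::monoid_add set \<Rightarrow> 'a set" for A where
  zero: "0 \<in> gen_sg A"
| add: "a \<in> A \<Longrightarrow> x \<in> gen_sg A \<Longrightarrow> a + x \<in> gen_sg A"

definition pointed :: "'a::group_add set \<Rightarrow> bool" where
  "pointed S \<longleftrightarrow> (\<forall>s\<in>S. - s \<in> S \<longrightarrow> s = 0)"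

definition SM :: "('n::finite \<Rightarrow> real) set \<Rightarrow> ('n \<Rightarrow> int) set" where
  "SM M = gen_sg (lattice_pts M)"

definition SMh :: "('n::finite \<Rightarrow> real) set \<Rightarrow> (('n \<Rightarrow> int) \<times> int) set" where
  "SMh M = gen_sg ((\<lambda>s. (s, 1)) ` lattice_pts M)"

text \<open>K[S] is the set of finitely supported K-valued functions on the group with support in S;
  the monomial X^s is single s 1; multiplication is convolution (X^s X^t = X^(s+t)).\<close>

definition salg :: "'a set \<Rightarrow> ('a \<Rightarrow>\<^sub>0 'k::zero) set" where
  "salg S = {f. Poly_Mapping.keys f \<subseteq> S}"

definition mon :: "'a \<Rightarrow> 'a \<Rightarrow>\<^sub>0 'k::{zero,one}" where
  "mon s = Poly_Mapping.single s 1"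

definition is_ideal :: "'a::monoid_add set \<Rightarrow> ('a \<Rightarrow>\<^sub>0 'k::comm_ring_1) set \<Rightarrow> bool" where
  "is_ideal S I \<longleftrightarrow> I \<subseteq> salg S \<and> 0 \<in> I \<and> (\<forall>f\<in>I. \<forall>g\<in>I. f + g \<in> I)
     \<and> (\<forall>f\<in>I. \<forall>h\<in>salg S. h * f \<in> I)"

definition ideal_gen :: "'a::monoid_add set \<Rightarrow> ('a \<Rightarrow>\<^sub>0 'k::comm_ring_1) set \<Rightarrow> ('a \<Rightarrow>\<^sub>0 'k) set" where
  "ideal_gen S G = \<Inter>{I. is_ideal S I \<and> G \<subseteq> I}"

definition hom_comp :: "int \<Rightarrow> (('n \<Rightarrow> int) \<times> int \<Rightarrow>\<^sub>0 'k::comm_ring_1) \<Rightarrow> (('n \<Rightarrow> int) \<times> int \<Rightarrow>\<^sub>0 'k)" where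
  "hom_comp d f = (\<Sum>m\<in>{m\<in>Poly_Mapping.keys f. snd m = d}. Poly_Mapping.single m (Poly_Mapping.lookup f m))"

definition homogeneous :: "(('n \<Rightarrow> int) \<times> int \<Rightarrow>\<^sub>0 'k::zero) \<Rightarrow> bool" where
  "homogeneous f \<longleftrightarrow> (\<exists>d. \<forall>m\<in>Poly_Mapping.keys f. snd m = d)"

definition hdeg :: "(('n \<Rightarrow> int) \<times> int \<Rightarrow>\<^sub>0 'k::zero) \<Rightarrow> int" where
  "hdeg f = (SOME d. \<forall>m\<in>Poly_Mapping.keys f. snd m = d)"

definition homogeneous_ideal :: "(('n \<Rightarrow> int) \<times> int) set \<Rightarrow> (('n \<Rightarrow> int) \<times> int \<Rightarrow>\<^sub>0 'k::comm_ring_1) set \<Rightarrow> bool" where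
  "homogeneous_ideal S I \<longleftrightarrow> is_ideal S I \<and> (\<forall>f\<in>I. \<forall>d. hom_comp d f \<in> I)"

definition mons_deg :: "('n::finite \<Rightarrow> real) set \<Rightarrow> int \<Rightarrow> (('n \<Rightarrow> int) \<times> int) set" where
  "mons_deg M d = {m \<in> SMh M. snd m = d}"

definition adeg :: "('n::finite \<Rightarrow> real) set \<Rightarrow> ('n \<Rightarrow> int) \<Rightarrow> nat" where
  "adeg M s = (LEAST d::nat. (s, int d) \<in> SMh M)"

definition adeg_poly :: "('n::finite \<Rightarrow> real) set \<Rightarrow> (('n \<Rightarrow> int) \<Rightarrow>\<^sub>0 'k::zero) \<Rightarrow> nat" where
  "adeg_poly M f = Max (insert 0 (adeg M ` Poly_Mapping.keys f))"

definition chi :: "(('n \<Rightarrow> int) \<times> int \<Rightarrow>\<^sub>0 'k::comm_monoid_add) \<Rightarrow> (('n \<Rightarrow> int) \<Rightarrow>\<^sub>0 'k)" where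
  "chi f = (\<Sum>m\<in>Poly_Mapping.keys f. Poly_Mapping.single (fst m) (Poly_Mapping.lookup f m))"

definition sdeg :: "('n::finite \<Rightarrow> real) set \<Rightarrow> (('n \<Rightarrow> int) \<times> int \<Rightarrow>\<^sub>0 'k::{comm_monoid_add,one}) \<Rightarrow> nat" where
  "sdeg M f = adeg_poly M (chi f)"

definition monomial_order :: "'a::monoid_add set \<Rightarrow> ('a \<Rightarrow> 'a \<Rightarrow> bool) \<Rightarrow> bool" where
  "monomial_order S lt \<longleftrightarrow>
     (\<forall>x\<in>S. \<not> lt x x) \<and>
     (\<forall>x\<in>S. \<forall>y\<in>S. \<forall>z\<in>S. lt x y \<longrightarrow> lt y z \<longrightarrow> lt x z) \<and>
     (\<forall>x\<in>S. \<forall>y\<in>S. x \<noteq> y \<longrightarrow> lt x y \<or> lt y x) \<and>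
     (\<forall>x\<in>S. \<forall>y\<in>S. \<forall>z\<in>S. lt x y \<longrightarrow> lt (x + z) (y + z)) \<and>
     (\<forall>x\<in>S. x \<noteq> 0 \<longrightarrow> lt 0 x)"

definition sparse_less :: "('n::finite \<Rightarrow> real) set \<Rightarrow> (('n \<Rightarrow> int) \<Rightarrow> ('n \<Rightarrow> int) \<Rightarrow> bool)
    \<Rightarrow> ('n \<Rightarrow> int) \<Rightarrow> ('n \<Rightarrow> int) \<Rightarrow> bool" where
  "sparse_less M lt s r \<longleftrightarrow> adeg M s < adeg M r \<or> (adeg M s = adeg M r \<and> lt s r)"

definition gsparse_less :: "('n::finite \<Rightarrow> real) set \<Rightarrow> (('n \<Rightarrow> int) \<Rightarrow> ('n \<Rightarrow> int) \<Rightarrow> bool)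
    \<Rightarrow> ('n \<Rightarrow> int) \<times> int \<Rightarrow> ('n \<Rightarrow> int) \<times> int \<Rightarrow> bool" where
  "gsparse_less M lt a b \<longleftrightarrow> snd a < snd b \<or> (snd a = snd b \<and> sparse_less M lt (fst a) (fst b))"

definition lm :: "('a \<Rightarrow> 'a \<Rightarrow> bool) \<Rightarrow> ('a \<Rightarrow>\<^sub>0 'k::zero) \<Rightarrow> 'a" where
  "lm lt f = (THE m. m \<in> Poly_Mapping.keys f \<and> (\<forall>m'\<in>Poly_Mapping.keys f. m' \<noteq> m \<longrightarrow> lt m' m))"

definition ddvd :: "('n::finite \<Rightarrow> real) set \<Rightarrow> ('k::{comm_ring_1} itself)
    \<Rightarrow> ('n \<Rightarrow> int) \<times> int \<Rightarrow> ('n \<Rightarrow> int) \<times> int \<Rightarrow> bool" where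
  "ddvd M K a b \<longleftrightarrow> (\<exists>c\<in>SMh M. a + c = b \<and>
      sdeg M (mon a :: _ \<Rightarrow>\<^sub>0 'k) + sdeg M (mon c :: _ \<Rightarrow>\<^sub>0 'k) = sdeg M (mon b :: _ \<Rightarrow>\<^sub>0 'k))"

definition sparse_GB :: "('n::finite \<Rightarrow> real) set \<Rightarrow> (('n \<Rightarrow> int) \<Rightarrow> ('n \<Rightarrow> int) \<Rightarrow> bool)
    \<Rightarrow> (('n \<Rightarrow> int) \<times> int \<Rightarrow>\<^sub>0 'k::comm_ring_1) set \<Rightarrow> (('n \<Rightarrow> int) \<times> int \<Rightarrow>\<^sub>0 'k) set \<Rightarrow> bool" where
  "sparse_GB M lt I G \<longleftrightarrow> G \<subseteq> I \<and> ideal_gen (SMh M) G = I \<and>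
     (\<forall>f\<in>I. f \<noteq> 0 \<longrightarrow> (\<exists>g\<in>G. g \<noteq> 0 \<and>
        ddvd M TYPE('k) (lm (gsparse_less M lt) g) (lm (gsparse_less M lt) f)))"

definition macaulay :: "'a list \<Rightarrow> ('a \<Rightarrow>\<^sub>0 'k::zero) list \<Rightarrow> 'k mat" where
  "macaulay cs rs = mat (length rs) (length cs) (\<lambda>(i, j). Poly_Mapping.lookup (rs ! i) (cs ! j))"

definition row_poly :: "'a list \<Rightarrow> 'k::comm_monoid_add mat \<Rightarrow> nat \<Rightarrow> ('a \<Rightarrow>\<^sub>0 'k)" where
  "row_poly cs A i = (\<Sum>j<length cs. Poly_Mapping.single (cs ! j) (A $$ (i, j)))"

definition Rows :: "'a list \<Rightarrow> 'k::comm_monoid_add mat \<Rightarrow> ('a \<Rightarrow>\<^sub>0 'k) set" where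
  "Rows cs A = {row_poly cs A i | i. i < dim_row A} - {0}"

definition rref :: "'k::field mat \<Rightarrow> 'k mat" where
  "rref A = gauss_jordan_single A"

definition ref :: "'k::field mat \<Rightarrow> bool" where
  "ref A \<longleftrightarrow> (\<exists>f. \<forall>i < dim_row A. f i \<le> dim_col A \<and> (\<forall>j < f i. A $$ (i, j) = 0) \<and>
      (f i < dim_col A \<longrightarrow> A $$ (i, f i) \<noteq> 0) \<and>
      (Suc i < dim_row A \<longrightarrow> f i < f (Suc i) \<or> f (Suc i) = dim_col A))"

definition rows_indep :: "'k::field mat \<Rightarrow> bool" where
  "rows_indep A \<longleftrightarrow> (\<forall>c. (\<forall>j < dim_col A. (\<Sum>i<dim_row A. c i * A $$ (i, j)) = 0)
      \<longrightarrow> (\<forall>i < dim_row A. c i = 0))"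

definition cols_indep :: "'k::field mat \<Rightarrow> bool" where
  "cols_indep A \<longleftrightarrow> (\<forall>c. (\<forall>i < dim_row A. (\<Sum>j<dim_col A. c j * A $$ (i, j)) = 0)
      \<longrightarrow> (\<forall>j < dim_col A. c j = 0))"

text \<open>Full rank: rank = min(#rows, #cs), i.e. rows or columns linearly independent.\<close>
definition full_rank :: "'k::field mat \<Rightarrow> bool" where
  "full_rank A \<longleftrightarrow> rows_indep A \<or> cols_indep A"

end

theory Submission
  imports Defs
begin

lemma lookup_single_mult:
  fixes f :: "'a::ab_group_add \<Rightarrow>\<^sub>0 'b::comm_semiring_1"
  shows "Poly_Mapping.lookup (Poly_Mapping.single t c * f) x = c * Poly_Mapping.lookup f (x - t)"
proof -
  define S where "S = (\<lambda>l. (\<Sum>q. Poly_Mapping.lookup f q when x = l + q))"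
  have "Poly_Mapping.lookup (Poly_Mapping.single t c * f) x
      = (\<Sum>l. Poly_Mapping.lookup (Poly_Mapping.single t c) l * S l)"
    unfolding S_def by (rule lookup_mult)
  also have "(\<lambda>l. Poly_Mapping.lookup (Poly_Mapping.single t c) l * S l) = (\<lambda>l. (c * S t) when l = t)"
    by (auto simp: lookup_single when_def)
  also have "(\<Sum>l. (c * S t) when l = t) = c * S t" by simp
  also have "S t = (\<Sum>q. Poly_Mapping.lookup f q when q = x - t)"
    unfolding S_def by (rule Sum_any.cong) (auto simp: when_def algebra_simps)
  also have "... = Poly_Mapping.lookup f (x - t)"
    by simp
  finally show ?thesis .
qed

lemma keys_single_mult:
  fixes f :: "'a::ab_group_add \<Rightarrow>\<^sub>0 'b::comm_semiring_1"
  shows "Poly_Mapping.keys (Poly_Mapping.single t c * f) \<subseteq> (\<lambda>k. t + k) ` Poly_Mapping.keys f"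
proof
  fix x assume "x \<in> Poly_Mapping.keys (Poly_Mapping.single t c * f)"
  hence "c * Poly_Mapping.lookup f (x - t) \<noteq> 0" by (simp add: in_keys_iff lookup_single_mult)
  hence "x - t \<in> Poly_Mapping.keys f" by (auto simp: in_keys_iff)
  thus "x \<in> (\<lambda>k. t + k) ` Poly_Mapping.keys f" by (intro image_eqI[of _ _ "x - t"]) auto
qed

lemma gen_sg_add: "x \<in> gen_sg A \<Longrightarrow> y \<in> gen_sg A \<Longrightarrow> x + y \<in> gen_sg A"
  by (induction x rule: gen_sg.induct) (auto simp: add.assoc intro: gen_sg.add)

lemma SMh_add: "x \<in> SMh M \<Longrightarrow> y \<in> SMh M \<Longrightarrow> x + y \<in> SMh M"
  unfolding SMh_def by (rule gen_sg_add)

lemma SMh_zero: "0 \<in> SMh M"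
  unfolding SMh_def by (rule gen_sg.zero)

lemma SMh_fst: "k \<in> SMh M \<Longrightarrow> fst k \<in> SM M"
  unfolding SMh_def SM_def
proof (induction k rule: gen_sg.induct)
  case zero
  show ?case by (metis fst_zero gen_sg.zero)
next
  case (add a x)
  then obtain s where s: "s \<in> lattice_pts M" "a = (s, 1)" by auto
  have "fst (a + x) = s + fst x" using s by simp
  thus ?case using gen_sg.add[OF s(1) add.IH] by metis
qed

lemma SMh_snd: "k \<in> SMh M \<Longrightarrow> snd k \<ge> 0"
  unfolding SMh_def
  by (induction k rule: gen_sg.induct) auto

lemma adeg_SMh:
  assumes "k \<in> SMh M"
  shows "(fst k, int (adeg M (fst k))) \<in> SMh M" "adeg M (fst k) \<le> nat (snd k)"
proof -
  have "(fst k, int (nat (snd k))) \<in> SMh M" using assms SMh_snd[OF assms] by simp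
  thus "(fst k, int (adeg M (fst k))) \<in> SMh M" unfolding adeg_def by (rule LeastI)
  show "adeg M (fst k) \<le> nat (snd k)" unfolding adeg_def
    by (rule Least_le) (use \<open>(fst k, int (nat (snd k))) \<in> SMh M\<close> in simp)
qed

lemma adeg_add:
  assumes "a \<in> SMh M" "b \<in> SMh M"
  shows "adeg M (fst a + fst b) \<le> adeg M (fst a) + adeg M (fst b)"
proof -
  have "(fst a, int (adeg M (fst a))) + (fst b, int (adeg M (fst b))) \<in> SMh M"
    using adeg_SMh(1)[OF assms(1)] adeg_SMh(1)[OF assms(2)] by (rule SMh_add)
  hence "(fst a + fst b, int (adeg M (fst a) + adeg M (fst b))) \<in> SMh M" by simp
  thus ?thesis unfolding adeg_def by (rule Least_le)
qed

lemma sdeg_mon: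
  "sdeg M (mon x :: _ \<Rightarrow>\<^sub>0 'k::{comm_monoid_add,zero_neq_one}) = adeg M (fst x)"
proof -
  have "chi (mon x :: _ \<Rightarrow>\<^sub>0 'k) = Poly_Mapping.single (fst x) 1"
    unfolding chi_def mon_def by simp
  thus ?thesis unfolding sdeg_def adeg_poly_def by simp
qed

definition rsp :: "'k::field mat \<Rightarrow> 'k vec set" where
  "rsp A = {vec (dim_col A) (\<lambda>j. \<Sum>i<dim_row A. c i * A $$ (i,j)) | c. True}"

lemma rsp_mult:
  assumes P: "P \<in> carrier_mat nr' nr" and A: "A \<in> carrier_mat nr n"
  shows "rsp (P*A) \<subseteq> rsp A"
proof
  fix v assume "v \<in> rsp (P*A)"
  then obtain c where v: "v = vec n (\<lambda>j. \<Sum>i<nr'. c i * (P*A) $$ (i,j))"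
    using P A by (auto simp: rsp_def)
  define d where "d = (\<lambda>l. \<Sum>i<nr'. c i * P $$ (i,l))"
  have "v = vec n (\<lambda>j. \<Sum>l<nr. d l * A $$ (l,j))"
    unfolding v
  proof (rule eq_vecI)
    fix j assume "j < dim_vec (vec n (\<lambda>j. \<Sum>l<nr. d l * A $$ (l,j)))"
    hence j: "j<n" by simp
    have "(\<Sum>i<nr'. c i * (P*A) $$ (i,j)) = (\<Sum>i<nr'. c i * (\<Sum>l<nr. P$$(i,l) * A$$(l,j)))"
      using P A j by (intro sum.cong) (auto simp: scalar_prod_def atLeast0LessThan)
    also have "... = (\<Sum>i<nr'. \<Sum>l<nr. c i * P$$(i,l) * A$$(l,j))"
      by (simp add: sum_distrib_left mult.assoc)
    also have "... = (\<Sum>l<nr. \<Sum>i<nr'. c i * P$$(i,l) * A$$(l,j))"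
      by (rule sum.swap)
    also have "... = (\<Sum>l<nr. d l * A $$ (l,j))"
      unfolding d_def by (simp add: sum_distrib_right)
    finally show "vec n (\<lambda>j. \<Sum>i<nr'. c i * (P * A) $$ (i, j)) $ j = vec n (\<lambda>j. \<Sum>l<nr. d l * A $$ (l, j)) $ j"
      using j by simp
  qed simp
  thus "v \<in> rsp A" using A by (auto simp: rsp_def)
qed

lemma rsp_carrier: "rsp A \<subseteq> carrier_vec (dim_col A)"
  by (auto simp: rsp_def)

lemma rsp_diff: assumes "v \<in> rsp A" "w \<in> rsp A" shows "v - w \<in> rsp A"
proof -
  from assms obtain c d where v: "v = vec (dim_col A) (\<lambda>j. \<Sum>i<dim_row A. c i * A $$ (i,j))"
    and w: "w = vec (dim_col A) (\<lambda>j. \<Sum>i<dim_row A. d i * A $$ (i,j))" by (auto simp: rsp_def)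
  have "v - w = vec (dim_col A) (\<lambda>j. \<Sum>i<dim_row A. (c i - d i) * A $$ (i,j))"
    unfolding v w by (rule eq_vecI) (auto simp: left_diff_distrib sum_subtractf)
  thus ?thesis by (auto simp: rsp_def)
qed

lemma row_in_rsp: assumes "i < dim_row A" shows "row A i \<in> rsp A"
proof -
  have "row A i = vec (dim_col A) (\<lambda>j. \<Sum>l<dim_row A. (if l = i then 1 else 0) * A $$ (l,j))"
  proof (rule eq_vecI)
    fix j assume "j < dim_vec (vec (dim_col A) (\<lambda>j. \<Sum>l<dim_row A. (if l = i then 1 else 0) * A $$ (l,j)))"
    hence j: "j < dim_col A" by simp
    have "(\<Sum>l<dim_row A. (if l = i then 1 else 0) * A $$ (l,j)) = (\<Sum>l<dim_row A. if l = i then A $$ (i,j) else 0)"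
      by (rule sum.cong) auto
    also have "... = A $$ (i,j)" using assms by simp
    finally show "row A i $ j = vec (dim_col A) (\<lambda>j. \<Sum>l<dim_row A. (if l = i then 1 else 0) * A $$ (l,j)) $ j"
      using j assms by simp
  qed simp
  thus ?thesis unfolding rsp_def by (intro CollectI exI[of _ "\<lambda>l. if l = i then 1 else 0"]) simp
qed

definition lead :: "'k::zero vec \<Rightarrow> nat" where "lead v = (LEAST j. v $ j \<noteq> 0)"

definition piv :: "nat \<Rightarrow> 'k::zero vec set \<Rightarrow> nat set" where
  "piv n V = {lead v | v. v \<in> V \<and> v \<noteq> 0\<^sub>v n}"

definition NZ :: "'k::zero mat \<Rightarrow> 'k vec set" where
  "NZ C = {row C i | i. i < dim_row C} - {0\<^sub>v (dim_col C)}"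

lemma lead_nonzero:
  assumes "v \<in> carrier_vec n" "v \<noteq> 0\<^sub>v n"
  shows "lead v < n" "v $ lead v \<noteq> 0" "\<And>j. j < lead v \<Longrightarrow> v $ j = 0"
proof -
  from assms obtain j where j: "j < n" "v $ j \<noteq> 0"
    by (metis carrier_vecD eq_vecI index_zero_vec(1,2))
  show "v $ lead v \<noteq> 0" unfolding lead_def using j(2) by (rule LeastI)
  show "lead v < n" unfolding lead_def using j by (meson Least_le le_less_trans)
  show "\<And>j. j < lead v \<Longrightarrow> v $ j = 0" unfolding lead_def using not_less_Least by blast
qed

lemma pivot_char:
  fixes C :: "'k::field mat"
  assumes C: "C \<in> carrier_mat nr n" and pf: "pivot_fun C f n"
  shows "NZ C = {v \<in> rsp C. \<exists>p\<in>piv n (rsp C). v $ p = 1 \<and> (\<forall>q\<in>piv n (rsp C). q \<noteq> p \<longrightarrow> v $ q = 0)}"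
proof -
  have dr: "dim_row C = nr" and dc: "dim_col C = n" using C by auto
  note pd = pivot_funD[OF dr pf]
  have rowz: "row C i = 0\<^sub>v n" if "i < nr" "f i = n" for i
    using pd(2)[OF that(1)] that C by (intro eq_vecI) auto
  have rowlead: "lead (row C i) = f i" if i: "i < nr" "f i < n" for i
    unfolding lead_def
  proof (rule Least_equality)
    show "row C i $ f i \<noteq> 0" using pd(4)[OF i] i C by auto
    show "f i \<le> y" if "row C i $ y \<noteq> 0" for y
    proof (rule ccontr)
      assume "\<not> f i \<le> y" hence "y < f i" by simp
      thus False using pd(2)[OF i(1) \<open>y < f i\<close>] that i C by auto
    qed
  qed
  have rownz: "row C i \<noteq> 0\<^sub>v n" if i: "i < nr" "f i < n" for i
  proof
    assume "row C i = 0\<^sub>v n"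
    hence "row C i $ f i = 0" using i by simp
    thus False using pd(4)[OF i] i C by auto
  qed
  have pivset: "piv n (rsp C) = {f i | i. i < nr \<and> f i < n}"
  proof
    show "{f i | i. i < nr \<and> f i < n} \<subseteq> piv n (rsp C)"
    proof
      fix p assume "p \<in> {f i | i. i < nr \<and> f i < n}"
      then obtain i where i: "i < nr" "f i < n" "p = f i" by auto
      have "row C i \<in> rsp C" using row_in_rsp[of i C] i dr by simp
      hence "p = lead (row C i) \<and> row C i \<in> rsp C \<and> row C i \<noteq> 0\<^sub>v n"
        using i rowlead[OF i(1,2)] rownz[OF i(1,2)] by simp
      thus "p \<in> piv n (rsp C)" unfolding piv_def by blast
    qed
    show "piv n (rsp C) \<subseteq> {f i | i. i < nr \<and> f i < n}"
    proof
      fix p assume "p \<in> piv n (rsp C)"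
      then obtain v where v: "v \<in> rsp C" "v \<noteq> 0\<^sub>v n" "p = lead v" unfolding piv_def by auto
      then obtain c where vc: "v = vec n (\<lambda>j. \<Sum>i<nr. c i * C $$ (i,j))"
        unfolding rsp_def dr dc by auto
      define S where "S = {i. i < nr \<and> c i \<noteq> 0 \<and> f i < n}"
      have finS: "finite S" unfolding S_def by auto
      have zeroterm: "c i * C $$ (i,j) = 0" if "i < nr" "i \<notin> S" "j < n" for i j
      proof -
        have "c i = 0 \<or> f i = n" using that pd(1)[OF that(1)] unfolding S_def by auto
        thus ?thesis using pd(2)[OF that(1)] that by auto
      qed
      show "p \<in> {f i | i. i < nr \<and> f i < n}"
      proof (cases "S = {}")
        case True
        have "v = 0\<^sub>v n" unfolding vc
          by (rule eq_vecI) (auto intro!: sum.neutral zeroterm simp: True)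
        thus ?thesis using v by auto
      next
        case False
        define m where "m = Min (f ` S)"
        have "m \<in> f ` S" unfolding m_def using finS False by simp
        then obtain i0 where i00: "i0 \<in> S" "f i0 = m" by auto
        have i0: "i0 \<in> S" "\<And>i. i \<in> S \<Longrightarrow> f i0 \<le> f i"
          using i00 finS unfolding m_def by auto
        have i0': "i0 < nr" "c i0 \<noteq> 0" "f i0 < n" using i0(1) unfolding S_def by auto
        have "v $ f i0 = (\<Sum>i<nr. c i * C $$ (i,f i0))" unfolding vc using i0' by simp
        also have "... = (\<Sum>i<nr. if i = i0 then c i0 * C $$ (i0, f i0) else 0)"
          by (rule sum.cong) (use i0' pd(5)[OF i0'(1,3)] in auto)
        also have "... = c i0 * C $$ (i0, f i0)" using i0' by simp
        also have "... = c i0" using pd(4)[OF i0'(1,3)] by simp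
        finally have vp: "v $ f i0 = c i0" .
        have "lead v = f i0" unfolding lead_def
        proof (rule Least_equality)
          show "v $ f i0 \<noteq> 0" using vp i0' by simp
          show "f i0 \<le> y" if "v $ y \<noteq> 0" for y
          proof (rule ccontr)
            assume "\<not> f i0 \<le> y" hence y: "y < f i0" by simp
            have "v $ y = (\<Sum>i<nr. c i * C $$ (i,y))" unfolding vc using y i0' by simp
            also have "... = 0"
            proof (rule sum.neutral, rule ballI)
              fix i assume i: "i \<in> {..<nr}"
              show "c i * C $$ (i,y) = 0"
              proof (cases "i \<in> S")
                case True
                have "y < f i" using i0(2)[OF True] y by simp
                thus ?thesis using pd(2) i by auto
              next
                case False thus ?thesis using zeroterm[of i y] i y i0' by auto
              qed
            qed
            finally show False using that by simp
          qed
        qed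
        thus ?thesis using v i0' by auto
      qed
    qed
  qed
  have rspc: "rsp C \<subseteq> carrier_vec n" using rsp_carrier[of C] dc by simp
  show ?thesis
  proof
    show "NZ C \<subseteq> {v \<in> rsp C. \<exists>p\<in>piv n (rsp C). v $ p = 1 \<and> (\<forall>q\<in>piv n (rsp C). q \<noteq> p \<longrightarrow> v $ q = 0)}"
    proof
      fix v assume "v \<in> NZ C"
      then obtain i where i: "i < nr" "v = row C i" "v \<noteq> 0\<^sub>v n" unfolding NZ_def dr dc by auto
      have fi: "f i < n"
      proof (rule ccontr)
        assume "\<not> f i < n"
        hence "f i = n" using pd(1)[OF i(1)] by simp
        thus False using rowz[OF i(1)] i by simp
      qed
      have A: "v \<in> rsp C" using row_in_rsp[of i C] i dr by simp
      have B: "f i \<in> piv n (rsp C)" using pivset i fi by blast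
      have Cc: "v $ f i = 1" using pd(4)[OF i(1) fi] i fi C by simp
      have D: "v $ q = 0" if q: "q \<in> piv n (rsp C)" "q \<noteq> f i" for q
      proof -
        obtain i' where i': "i' < nr" "f i' < n" "q = f i'" using q(1) unfolding pivset by blast
        have "i' \<noteq> i" using i' q(2) by auto
        thus "v $ q = 0" using pd(5)[OF i'(1,2) i(1)] i i' C by simp
      qed
      show "v \<in> {v \<in> rsp C. \<exists>p\<in>piv n (rsp C). v $ p = 1 \<and> (\<forall>q\<in>piv n (rsp C). q \<noteq> p \<longrightarrow> v $ q = 0)}"
        using A B Cc D by blast
    qed
    show "{v \<in> rsp C. \<exists>p\<in>piv n (rsp C). v $ p = 1 \<and> (\<forall>q\<in>piv n (rsp C). q \<noteq> p \<longrightarrow> v $ q = 0)} \<subseteq> NZ C"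
    proof
      fix v assume "v \<in> {v \<in> rsp C. \<exists>p\<in>piv n (rsp C). v $ p = 1 \<and> (\<forall>q\<in>piv n (rsp C). q \<noteq> p \<longrightarrow> v $ q = 0)}"
      then obtain p where v: "v \<in> rsp C" "p \<in> piv n (rsp C)" "v $ p = 1"
        "\<And>q. q \<in> piv n (rsp C) \<Longrightarrow> q \<noteq> p \<Longrightarrow> v $ q = 0" by blast
      obtain i where i: "i < nr" "f i < n" "p = f i" using v(2) unfolding pivset by blast
      define w where "w = v - row C i"
      have wr: "w \<in> rsp C" unfolding w_def by (rule rsp_diff[OF v(1) row_in_rsp]) (use i dr in simp)
      have wc: "w \<in> carrier_vec n" using wr rspc by blast
      have vq: "v \<in> carrier_vec n" using v(1) rspc by blast
      have wz: "w $ q = 0" if qq: "q \<in> piv n (rsp C)" for q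
      proof -
        obtain i' where i': "i' < nr" "f i' < n" "q = f i'" using qq unfolding pivset by blast
        have q: "q < n" using i' by simp
        show ?thesis
        proof (cases "q = p")
          case True thus ?thesis unfolding w_def using v(3) i pd(4)[OF i(1,2)] q vq C by simp
        next
          case False
          have "i' \<noteq> i" using i' i False by auto
          thus ?thesis unfolding w_def using v(4)[OF qq False] pd(5)[OF i'(1,2) i(1)] i' i q vq C by simp
        qed
      qed
      have "w = 0\<^sub>v n"
      proof (rule ccontr)
        assume nz: "w \<noteq> 0\<^sub>v n"
        hence "lead w \<in> piv n (rsp C)" unfolding piv_def using wr by blast
        thus False using wz lead_nonzero(2)[OF wc nz] by simp
      qed
      hence "v = row C i"
      proof -
        assume w0: "w = 0\<^sub>v n"
        show "v = row C i"
        proof (rule eq_vecI)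
          fix j assume "j < dim_vec (row C i)"
          hence j: "j < n" using C by simp
          have "w $ j = 0" using w0 j by simp
          thus "v $ j = row C i $ j" unfolding w_def using j vq C i by simp
        qed (use vq C in simp)
      qed
      moreover have "v \<noteq> 0\<^sub>v n" using v(3) i by auto
      ultimately show "v \<in> NZ C" unfolding NZ_def using i dr dc by auto
    qed
  qed
qed

lemma rref_props:
  fixes A :: "'k::field mat"
  assumes A: "A \<in> carrier_mat nr n"
  shows "rref A \<in> carrier_mat nr n" "rsp (rref A) = rsp A" "\<exists>f. pivot_fun (rref A) f n"
proof -
  note g = gauss_jordan_single[OF A refl]
  show c: "rref A \<in> carrier_mat nr n" using g(2) unfolding rref_def .
  show "\<exists>f. pivot_fun (rref A) f n" using g(3) c unfolding rref_def row_echelon_form_def by auto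
  obtain P Q where PQ: "gauss_jordan_single A = P * A" "P \<in> carrier_mat nr nr" "Q \<in> carrier_mat nr nr"
    "P * Q = 1\<^sub>m nr" "Q * P = 1\<^sub>m nr" using g(4) by blast
  have "Q * rref A = (Q * P) * A" unfolding rref_def PQ(1)
    using assoc_mult_mat[OF PQ(3) PQ(2) A] by simp
  also have "... = A" using PQ A by simp
  finally have "Q * rref A = A" .
  hence "rsp A \<subseteq> rsp (rref A)" using rsp_mult[OF PQ(3) c] by simp
  moreover have "rsp (rref A) \<subseteq> rsp A" unfolding rref_def PQ(1) by (rule rsp_mult[OF PQ(2) A])
  ultimately show "rsp (rref A) = rsp A" by blast
qed

lemma rref_NZ_eq:
  fixes A B :: "'k::field mat"
  assumes A: "A \<in> carrier_mat nr n" and B: "B \<in> carrier_mat nr' n" and eq: "rsp A = rsp B"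
  shows "NZ (rref A) = NZ (rref B)"
proof -
  note a = rref_props[OF A] and b = rref_props[OF B]
  obtain f where f: "pivot_fun (rref A) f n" using a(3) by blast
  obtain g where g: "pivot_fun (rref B) g n" using b(3) by blast
  show ?thesis unfolding pivot_char[OF a(1) f] pivot_char[OF b(1) g] a(2) b(2) eq ..
qed

lemma mo_D:
  assumes "monomial_order S lt"
  shows "\<And>x. x \<in> S \<Longrightarrow> \<not> lt x x"
    "\<And>x y z. x \<in> S \<Longrightarrow> y \<in> S \<Longrightarrow> z \<in> S \<Longrightarrow> lt x y \<Longrightarrow> lt y z \<Longrightarrow> lt x z"
    "\<And>x y. x \<in> S \<Longrightarrow> y \<in> S \<Longrightarrow> x \<noteq> y \<Longrightarrow> lt x y \<or> lt y x"
    "\<And>x y z. x \<in> S \<Longrightarrow> y \<in> S \<Longrightarrow> z \<in> S \<Longrightarrow> lt x y \<Longrightarrow> lt (x + z) (y + z)"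
  using assms unfolding monomial_order_def by blast+

lemma mo_compat:
  assumes "monomial_order S lt" "x \<in> S" "y \<in> S" "z \<in> S" "lt x y"
  shows "lt (x + z) (y + z)"
  using assms unfolding monomial_order_def by blast

lemma lth_irrefl:
  assumes mo: "monomial_order (SM M) lt" and a: "a \<in> SMh M"
  shows "\<not> gsparse_less M lt a a"
  using mo_D(1)[OF mo SMh_fst[OF a]] unfolding gsparse_less_def sparse_less_def by auto

lemma lth_trans:
  assumes mo: "monomial_order (SM M) lt" and a: "a \<in> SMh M" and b: "b \<in> SMh M" and c: "c \<in> SMh M"
    and ab: "gsparse_less M lt a b" and bc: "gsparse_less M lt b c"
  shows "gsparse_less M lt a c"
  using ab bc mo_D(2)[OF mo SMh_fst[OF a] SMh_fst[OF b] SMh_fst[OF c]]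
  unfolding gsparse_less_def sparse_less_def by auto

lemma lth_asym:
  assumes mo: "monomial_order (SM M) lt" and a: "a \<in> SMh M" and b: "b \<in> SMh M"
    and ab: "gsparse_less M lt a b"
  shows "\<not> gsparse_less M lt b a"
  using lth_trans[OF mo a b a ab] lth_irrefl[OF mo a] by blast

lemma lth_total:
  assumes mo: "monomial_order (SM M) lt" and a: "a \<in> SMh M" and b: "b \<in> SMh M" and ne: "a \<noteq> b"
  shows "gsparse_less M lt a b \<or> gsparse_less M lt b a"
proof (cases "snd a = snd b \<and> fst a = fst b")
  case True thus ?thesis using ne by (simp add: prod_eq_iff)
next
  case False
  thus ?thesis using mo_D(3)[OF mo SMh_fst[OF a] SMh_fst[OF b]]
    unfolding gsparse_less_def sparse_less_def by (cases "snd a = snd b") auto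
qed

lemma lth_shift:
  assumes mo: "monomial_order (SM M) lt" and t: "t \<in> SMh M" and k: "k \<in> SMh M" and l: "l \<in> SMh M"
    and sn: "snd k = snd l" and kl: "gsparse_less M lt k l"
    and dg: "adeg M (fst t) + adeg M (fst l) = adeg M (fst (t + l))"
  shows "gsparse_less M lt (t + k) (t + l)"
proof -
  have a1: "adeg M (fst t + fst k) \<le> adeg M (fst t) + adeg M (fst k)" by (rule adeg_add[OF t k])
  have kl': "adeg M (fst k) < adeg M (fst l) \<or> (adeg M (fst k) = adeg M (fst l) \<and> lt (fst k) (fst l))"
    using kl sn unfolding gsparse_less_def sparse_less_def by auto
  have "sparse_less M lt (fst t + fst k) (fst t + fst l)"
  proof (cases "adeg M (fst k) < adeg M (fst l)")
    case True
    thus ?thesis using a1 dg unfolding sparse_less_def by simp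
  next
    case False
    hence eq: "adeg M (fst k) = adeg M (fst l)" and lkl: "lt (fst k) (fst l)" using kl' by auto
    have "lt (fst k + fst t) (fst l + fst t)"
      using mo_compat[OF mo SMh_fst[OF k] SMh_fst[OF l] SMh_fst[OF t]] lkl by blast
    hence "lt (fst t + fst k) (fst t + fst l)" by (simp add: add.commute)
    thus ?thesis using a1 dg eq unfolding sparse_less_def by auto
  qed
  thus ?thesis using sn unfolding gsparse_less_def by simp
qed

lemma ex_max:
  assumes mo: "monomial_order (SM M) lt" and fin: "finite K" and ne: "K \<noteq> {}" and sub: "K \<subseteq> SMh M"
  shows "\<exists>m\<in>K. \<forall>m'\<in>K. m' \<noteq> m \<longrightarrow> gsparse_less M lt m' m"
  using fin ne sub
proof (induction K rule: finite_ne_induct)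
  case (singleton x) thus ?case by simp
next
  case (insert x F)
  then obtain m where m: "m \<in> F" "\<forall>m'\<in>F. m' \<noteq> m \<longrightarrow> gsparse_less M lt m' m" by auto
  have xs: "x \<in> SMh M" and ms: "m \<in> SMh M" using insert m by auto
  have xm: "x \<noteq> m" using insert m by auto
  show ?case
  proof (cases "gsparse_less M lt x m")
    case True thus ?thesis using m by auto
  next
    case False
    hence mx: "gsparse_less M lt m x" using lth_total[OF mo xs ms xm] by simp
    have "\<forall>m'\<in>insert x F. m' \<noteq> x \<longrightarrow> gsparse_less M lt m' x"
    proof (intro ballI impI)
      fix m' assume "m' \<in> insert x F" "m' \<noteq> x"
      hence m'F: "m' \<in> F" by simp
      hence m's: "m' \<in> SMh M" using insert by auto
      show "gsparse_less M lt m' x"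
      proof (cases "m' = m")
        case True thus ?thesis using mx by simp
      next
        case False
        thus ?thesis using lth_trans[OF mo m's ms xs _ mx] m(2) m'F by blast
      qed
    qed
    thus ?thesis by blast
  qed
qed

lemma lm_prop:
  fixes f :: "_ \<Rightarrow>\<^sub>0 'k::zero"
  assumes mo: "monomial_order (SM M) lt" and sub: "Poly_Mapping.keys f \<subseteq> SMh M" and nz: "f \<noteq> 0"
  shows "lm (gsparse_less M lt) f \<in> Poly_Mapping.keys f"
    "\<And>m'. m' \<in> Poly_Mapping.keys f \<Longrightarrow> m' \<noteq> lm (gsparse_less M lt) f \<Longrightarrow> gsparse_less M lt m' (lm (gsparse_less M lt) f)"
proof -
  have kne: "Poly_Mapping.keys f \<noteq> {}" using nz by simp
  obtain m where m: "m \<in> Poly_Mapping.keys f" "\<forall>m'\<in>Poly_Mapping.keys f. m' \<noteq> m \<longrightarrow> gsparse_less M lt m' m"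
    using ex_max[OF mo finite_keys kne sub] by blast
  have uniq: "m2 = m" if m2: "m2 \<in> Poly_Mapping.keys f" "\<forall>m'\<in>Poly_Mapping.keys f. m' \<noteq> m2 \<longrightarrow> gsparse_less M lt m' m2" for m2
  proof (rule ccontr)
    assume ne: "m2 \<noteq> m"
    have s1: "m2 \<in> SMh M" "m \<in> SMh M" using sub m2(1) m(1) by auto
    have "gsparse_less M lt m2 m" using m(2) m2(1) ne by blast
    moreover have "m \<noteq> m2" using ne by simp
    hence "gsparse_less M lt m m2" using m2(2) m(1) by blast
    ultimately show False using lth_asym[OF mo s1] by simp
  qed
  have "lm (gsparse_less M lt) f = m" unfolding lm_def
  proof (rule the_equality)
    show "m \<in> Poly_Mapping.keys f \<and> (\<forall>m'\<in>Poly_Mapping.keys f. m' \<noteq> m \<longrightarrow> gsparse_less M lt m' m)"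
      using m by blast
    show "\<And>m2. m2 \<in> Poly_Mapping.keys f \<and> (\<forall>m'\<in>Poly_Mapping.keys f. m' \<noteq> m2 \<longrightarrow> gsparse_less M lt m' m2) \<Longrightarrow> m2 = m"
      using uniq by blast
  qed
  thus "lm (gsparse_less M lt) f \<in> Poly_Mapping.keys f"
    "\<And>m'. m' \<in> Poly_Mapping.keys f \<Longrightarrow> m' \<noteq> lm (gsparse_less M lt) f \<Longrightarrow> gsparse_less M lt m' (lm (gsparse_less M lt) f)"
    using m by auto
qed

lemma lm_unique:
  fixes f :: "_ \<Rightarrow>\<^sub>0 'k::zero"
  assumes mo: "monomial_order (SM M) lt" and sub: "Poly_Mapping.keys f \<subseteq> SMh M"
    and m: "m \<in> Poly_Mapping.keys f" "\<And>m'. m' \<in> Poly_Mapping.keys f \<Longrightarrow> m' \<noteq> m \<Longrightarrow> gsparse_less M lt m' m"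
  shows "lm (gsparse_less M lt) f = m"
proof -
  have nz: "f \<noteq> 0" using m(1) by auto
  note l = lm_prop[OF mo sub nz]
  show ?thesis
  proof (rule ccontr)
    assume ne: "lm (gsparse_less M lt) f \<noteq> m"
    have s1: "lm (gsparse_less M lt) f \<in> SMh M" "m \<in> SMh M" using sub l(1) m(1) by auto
    have "m \<noteq> lm (gsparse_less M lt) f" using ne by simp
    hence "gsparse_less M lt m (lm (gsparse_less M lt) f)" using l(2)[OF m(1)] by simp
    moreover have "gsparse_less M lt (lm (gsparse_less M lt) f) m" using m(2)[OF l(1) ne] .
    ultimately show False using lth_asym[OF mo s1(2,1)] by simp
  qed
qed

definition sc :: "'k \<Rightarrow> ('a \<Rightarrow>\<^sub>0 'k) \<Rightarrow> ('a::ab_group_add \<Rightarrow>\<^sub>0 'k::comm_semiring_1)" where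
  "sc c f = Poly_Mapping.single 0 c * f"

lemma lookup_sc: "Poly_Mapping.lookup (sc c f) x = c * Poly_Mapping.lookup f x"
  unfolding sc_def by (simp add: lookup_single_mult)

lemma sc_eqI: "(\<And>x. Poly_Mapping.lookup p x = Poly_Mapping.lookup q x) \<Longrightarrow> p = q"
  by (rule poly_mapping_eqI)

lemma sc_add_left: "sc (a + b) f = sc a f + sc b f"
  by (rule poly_mapping_eqI) (simp add: lookup_sc lookup_add distrib_right)

lemma sc_add_right: "sc a (f + g) = sc a f + sc a g"
  by (rule poly_mapping_eqI) (simp add: lookup_sc lookup_add distrib_left)

lemma sc_sc: "sc a (sc b f) = sc (a * b) f"
  by (rule poly_mapping_eqI) (simp add: lookup_sc mult.assoc)

lemma sc_zero: "sc 0 f = 0"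
  by (rule poly_mapping_eqI) (simp add: lookup_sc)

lemma sc_one: "sc 1 f = f"
  by (rule poly_mapping_eqI) (simp add: lookup_sc)

lemma keys_sc: "Poly_Mapping.keys (sc c f) \<subseteq> Poly_Mapping.keys f"
  by (auto simp: in_keys_iff lookup_sc)

definition LC :: "('a::ab_group_add \<Rightarrow>\<^sub>0 'k::comm_semiring_1) list \<Rightarrow> ('a \<Rightarrow>\<^sub>0 'k) set" where
  "LC xs = {(\<Sum>i<length xs. sc (c i) (xs ! i)) | c. True}"

lemma LC_zero: "0 \<in> LC xs"
proof -
  have "(\<Sum>i<length xs. sc ((\<lambda>_. 0) i) (xs ! i)) = 0" by (simp add: sc_zero)
  thus ?thesis unfolding LC_def by (intro CollectI exI[of _ "\<lambda>_. 0"]) simp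
qed

lemma LC_add: assumes "a \<in> LC xs" "b \<in> LC xs" shows "a + b \<in> LC xs"
proof -
  obtain c d where a: "a = (\<Sum>i<length xs. sc (c i) (xs ! i))" and b: "b = (\<Sum>i<length xs. sc (d i) (xs ! i))"
    using assms unfolding LC_def by blast
  have "a + b = (\<Sum>i<length xs. sc ((\<lambda>i. c i + d i) i) (xs ! i))"
    unfolding a b by (simp add: sc_add_left sum.distrib)
  thus ?thesis unfolding LC_def by (intro CollectI exI[of _ "\<lambda>i. c i + d i"]) simp
qed

lemma LC_sc: assumes "a \<in> LC xs" shows "sc e a \<in> LC xs"
proof -
  obtain c where a: "a = (\<Sum>i<length xs. sc (c i) (xs ! i))"
    using assms unfolding LC_def by blast
  have sum_sc: "sc e (\<Sum>i\<in>I. h i) = (\<Sum>i\<in>I. sc e (h i))" for I and h :: "nat \<Rightarrow> _"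
    by (induction I rule: infinite_finite_induct) (auto simp: sc_def distrib_left)
  have "sc e a = (\<Sum>i<length xs. sc ((\<lambda>i. e * c i) i) (xs ! i))"
    unfolding a sum_sc by (simp add: sc_sc)
  thus ?thesis unfolding LC_def by (intro CollectI exI[of _ "\<lambda>i. e * c i"]) simp
qed

lemma LC_elem: assumes "i < length xs" shows "xs ! i \<in> LC xs"
proof -
  have "(\<Sum>l<length xs. sc ((\<lambda>l. if l = i then 1 else 0) l) (xs ! l)) = (\<Sum>l<length xs. if l = i then xs ! i else 0)"
    by (rule sum.cong) (auto simp: sc_one sc_zero)
  also have "... = xs ! i" using assms by simp
  finally show ?thesis unfolding LC_def by (intro CollectI exI[of _ "\<lambda>l. if l = i then 1 else 0"]) simp
qed

lemma LC_set: assumes "x \<in> set xs" shows "x \<in> LC xs"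
  using assms LC_elem by (metis in_set_conv_nth)

lemma LC_sum: assumes "\<And>i. i \<in> I \<Longrightarrow> h i \<in> LC xs" shows "sum h I \<in> LC xs"
  using assms by (induction I rule: infinite_finite_induct) (auto simp: LC_zero LC_add)

lemma LC_sub: assumes "\<And>x. x \<in> set xs \<Longrightarrow> x \<in> LC ys" shows "LC xs \<subseteq> LC ys"
proof
  fix a assume "a \<in> LC xs"
  then obtain c where a: "a = (\<Sum>i<length xs. sc (c i) (xs ! i))" unfolding LC_def by blast
  show "a \<in> LC ys" unfolding a
    by (rule LC_sum, rule LC_sc, rule assms) simp
qed

definition vp :: "'a list \<Rightarrow> 'k vec \<Rightarrow> ('a \<Rightarrow>\<^sub>0 'k::comm_monoid_add)" where
  "vp cs v = (\<Sum>j<length cs. Poly_Mapping.single (cs ! j) (v $ j))"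

lemma lookup_vp_in:
  assumes d: "distinct cs" and j: "j < length cs"
  shows "Poly_Mapping.lookup (vp cs v) (cs ! j) = v $ j"
proof -
  have "Poly_Mapping.lookup (vp cs v) (cs ! j) = (\<Sum>l<length cs. if l = j then v $ j else 0)"
    unfolding vp_def lookup_sum
    by (rule sum.cong) (use d j in \<open>auto simp: lookup_single nth_eq_iff_index_eq\<close>)
  also have "... = v $ j" using j by simp
  finally show ?thesis .
qed

lemma lookup_vp_out:
  assumes "x \<notin> set cs"
  shows "Poly_Mapping.lookup (vp cs v) x = 0"
  unfolding vp_def lookup_sum
proof (rule sum.neutral, rule ballI)
  fix j assume "j \<in> {..<length cs}"
  hence "cs ! j \<noteq> x" using assms nth_mem by fastforce
  thus "Poly_Mapping.lookup (Poly_Mapping.single (cs ! j) (v $ j)) x = 0" by (simp add: lookup_single)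
qed

lemma vp_inj:
  assumes d: "distinct cs"
  shows "inj_on (vp cs) (carrier_vec (length cs))"
proof (rule inj_onI)
  fix v w assume v: "v \<in> carrier_vec (length cs)" and w: "w \<in> carrier_vec (length cs)"
    and eq: "vp cs v = vp cs w"
  show "v = w"
  proof (rule eq_vecI)
    fix j assume "j < dim_vec w"
    hence j: "j < length cs" using w by simp
    show "v $ j = w $ j" using lookup_vp_in[OF d j, of v] lookup_vp_in[OF d j, of w] eq by simp
  qed (use v w in simp)
qed

lemma vp_rsp:
  fixes xs :: "('a::ab_group_add \<Rightarrow>\<^sub>0 'k::field) list"
  assumes d: "distinct cs" and keys: "\<And>x. x \<in> set xs \<Longrightarrow> Poly_Mapping.keys x \<subseteq> set cs"
  shows "vp cs ` rsp (macaulay cs xs) = LC xs"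
proof -
  let ?n = "length cs"
  have main: "vp cs (vec ?n (\<lambda>j. \<Sum>i<length xs. c i * macaulay cs xs $$ (i,j)))
     = (\<Sum>i<length xs. sc (c i) (xs ! i))" for c
  proof (rule poly_mapping_eqI)
    fix x
    show "Poly_Mapping.lookup (vp cs (vec ?n (\<lambda>j. \<Sum>i<length xs. c i * macaulay cs xs $$ (i,j)))) x
      = Poly_Mapping.lookup (\<Sum>i<length xs. sc (c i) (xs ! i)) x"
    proof (cases "x \<in> set cs")
      case True
      then obtain j where j: "j < ?n" "x = cs ! j" by (metis in_set_conv_nth)
      show ?thesis unfolding j(2) lookup_vp_in[OF d j(1)] lookup_sum lookup_sc
        using j(1) by (auto simp: macaulay_def intro!: sum.cong)
    next
      case False
      have "Poly_Mapping.lookup (xs ! i) x = 0" if "i < length xs" for i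
        using keys[of "xs ! i"] that False by (auto simp: in_keys_iff)
      thus ?thesis unfolding lookup_vp_out[OF False] lookup_sum lookup_sc
        by (auto intro!: sum.neutral[symmetric])
    qed
  qed
  show ?thesis
  proof
    show "vp cs ` rsp (macaulay cs xs) \<subseteq> LC xs"
    proof
      fix p assume "p \<in> vp cs ` rsp (macaulay cs xs)"
      then obtain c where "p = vp cs (vec ?n (\<lambda>j. \<Sum>i<length xs. c i * macaulay cs xs $$ (i,j)))"
        unfolding rsp_def by (auto simp: macaulay_def)
      thus "p \<in> LC xs" unfolding main LC_def by blast
    qed
    show "LC xs \<subseteq> vp cs ` rsp (macaulay cs xs)"
    proof
      fix p assume "p \<in> LC xs"
      then obtain c where "p = (\<Sum>i<length xs. sc (c i) (xs ! i))" unfolding LC_def by blast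
      hence "p = vp cs (vec ?n (\<lambda>j. \<Sum>i<length xs. c i * macaulay cs xs $$ (i,j)))"
        unfolding main by simp
      moreover have "vec ?n (\<lambda>j. \<Sum>i<length xs. c i * macaulay cs xs $$ (i,j))
         \<in> rsp (macaulay cs xs)" unfolding rsp_def by (auto simp: macaulay_def)
      ultimately show "p \<in> vp cs ` rsp (macaulay cs xs)" by blast
    qed
  qed
qed

lemma Rows_vp:
  assumes "dim_col C = length cs"
  shows "Rows cs C = vp cs ` NZ C - {0}"
proof -
  have rp: "row_poly cs C i = vp cs (row C i)" if "i < dim_row C" for i
    unfolding row_poly_def vp_def using assms that by (intro sum.cong) auto
  have v0: "vp cs (0\<^sub>v (dim_col C)) = 0" unfolding vp_def using assms by (intro sum.neutral) auto
  show ?thesis unfolding Rows_def NZ_def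
  proof (intro equalityI subsetI)
    fix p assume "p \<in> {row_poly cs C i |i. i < dim_row C} - {0}"
    then obtain i where i: "i < dim_row C" "p = row_poly cs C i" "p \<noteq> 0" by blast
    have "row C i \<noteq> 0\<^sub>v (dim_col C)" using i v0 rp[OF i(1)] by auto
    thus "p \<in> vp cs ` ({row C i |i. i < dim_row C} - {0\<^sub>v (dim_col C)}) - {0}"
      using i rp[OF i(1)] by blast
  next
    fix p assume "p \<in> vp cs ` ({row C i |i. i < dim_row C} - {0\<^sub>v (dim_col C)}) - {0}"
    then obtain i where i: "i < dim_row C" "p = vp cs (row C i)" "p \<noteq> 0" by blast
    have "p = row_poly cs C i" using i rp[OF i(1)] by simp
    thus "p \<in> {row_poly cs C i |i. i < dim_row C} - {0}" using i by auto
  qed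
qed

theorem mainTheorem9:
  fixes M :: "('n::finite \<Rightarrow> real) set"
    and lt :: "('n \<Rightarrow> int) \<Rightarrow> ('n \<Rightarrow> int) \<Rightarrow> bool"
    and Ih G :: "(('n \<Rightarrow> int) \<times> int \<Rightarrow>\<^sub>0 'k::field_char_0) set"
    and D :: nat
    and assoc :: "('n \<Rightarrow> int) \<times> int \<Rightarrow> (('n \<Rightarrow> int) \<times> int \<Rightarrow>\<^sub>0 'k)"
    and cols :: "(('n \<Rightarrow> int) \<times> int) list"
  defines "lth \<equiv> gsparse_less M lt"
  defines "N \<equiv> {m \<in> mons_deg M (int D). \<exists>g\<in>G. g \<noteq> 0 \<and> ddvd M TYPE('k) (lm lth g) m}"
  defines "R \<equiv> {mon (THE t. t \<in> SMh M \<and> t + lm lth (assoc m) = m \<and>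
                    sdeg M (mon t :: _ \<Rightarrow>\<^sub>0 'k) + sdeg M (mon (lm lth (assoc m)) :: _ \<Rightarrow>\<^sub>0 'k)
                      = sdeg M (mon m :: _ \<Rightarrow>\<^sub>0 'k)) * assoc m | m. m \<in> N}"
  defines "Mrows \<equiv> {mon u * g | u g. g \<in> G \<and> u \<in> mons_deg M (int D - hdeg g)}"
  assumes polytope: "polytope M" and zero_in: "(0 :: 'n \<Rightarrow> real) \<in> M"
    and pointed_SM: "pointed (SM M)" and pointed_SMh: "pointed (SMh M)"
    and morder: "monomial_order (SM M) lt"
    and hom_ideal: "homogeneous_ideal (SMh M) Ih"
    and GB: "sparse_GB M lt Ih G" and G_hom: "\<forall>g\<in>G. homogeneous g"
    and G_fin: "finite G"
    and assoc: "\<forall>m\<in>N. assoc m \<in> G \<and> assoc m \<noteq> 0 \<and> ddvd M TYPE('k) (lm lth (assoc m)) m"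
    and cols: "distinct cols" "set cols = mons_deg M (int D)" "sorted_wrt (\<lambda>a b. lth b a) cols"
  shows "(\<forall>rs ms. distinct rs \<and> set rs = R \<and> distinct ms \<and> set ms = Mrows \<longrightarrow>
            Rows cols (rref (macaulay cols rs)) = Rows cols (rref (macaulay cols ms))
            \<and> full_rank (macaulay cols rs))
       \<and> (\<exists>rs. distinct rs \<and> set rs = R \<and> ref (macaulay cols rs))"
proof -
  let ?n = "length cols"
  note mo = morder
  have isid: "is_ideal (SMh M) Ih" using hom_ideal unfolding homogeneous_ideal_def by blast
  have Ih_keys: "Poly_Mapping.keys f \<subseteq> SMh M" if "f \<in> Ih" for f
    using isid that unfolding is_ideal_def salg_def by blast
  have Ih_add: "f + g \<in> Ih" if "f \<in> Ih" "g \<in> Ih" for f g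
    using isid that unfolding is_ideal_def by blast
  have Ih_mul: "h * f \<in> Ih" if "f \<in> Ih" "h \<in> salg (SMh M)" for f h
    using isid that unfolding is_ideal_def by blast
  have GI: "G \<subseteq> Ih" using GB unfolding sparse_GB_def by blast
  have GBlm: "\<exists>g\<in>G. g \<noteq> 0 \<and> ddvd M TYPE('k) (lm lth g) (lm lth f)" if "f \<in> Ih" "f \<noteq> 0" for f
    using GB that unfolding sparse_GB_def lth_def by blast
  have mon_salg: "(mon t :: _ \<Rightarrow>\<^sub>0 'k) \<in> salg (SMh M)" if "t \<in> SMh M" for t
    using that unfolding salg_def mon_def by simp
  have sc_Ih: "sc c f \<in> Ih" if "f \<in> Ih" for f c
  proof -
    have "Poly_Mapping.single 0 c \<in> salg (SMh M)" unfolding salg_def using SMh_zero[of M] by auto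
    thus ?thesis unfolding sc_def using Ih_mul that by blast
  qed
  have colsD: "x \<in> set cols \<longleftrightarrow> x \<in> SMh M \<and> snd x = int D" for x
    using cols(2) unfolding mons_deg_def by blast
  have colsSMh: "x \<in> SMh M" if "x \<in> set cols" for x using colsD that by blast
  have srt: "lth (cols ! j) (cols ! i)" if "i < j" "j < ?n" for i j
    using sorted_wrt_nth_less[OF cols(3) that] by simp
  have asym: "\<not> lth b a" if "lth a b" "a \<in> SMh M" "b \<in> SMh M" for a b
    using lth_asym[OF mo that(2,3)] that(1) unfolding lth_def by blast
  have Lprop: "lm lth f \<in> Poly_Mapping.keys f"
     "\<And>m'. m' \<in> Poly_Mapping.keys f \<Longrightarrow> m' \<noteq> lm lth f \<Longrightarrow> lth m' (lm lth f)"
    if "Poly_Mapping.keys f \<subseteq> SMh M" "f \<noteq> (0 :: _ \<Rightarrow>\<^sub>0 'k)" for f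
    using lm_prop[OF mo that] unfolding lth_def by blast+
  have Luniq: "lm lth f = m"
    if "Poly_Mapping.keys f \<subseteq> SMh M" "m \<in> Poly_Mapping.keys (f :: _ \<Rightarrow>\<^sub>0 'k)"
       "\<And>m'. m' \<in> Poly_Mapping.keys f \<Longrightarrow> m' \<noteq> m \<Longrightarrow> lth m' m" for f m
  proof -
    have "\<And>m'. m' \<in> Poly_Mapping.keys f \<Longrightarrow> m' \<noteq> m \<Longrightarrow> gsparse_less M lt m' m"
      using that(3) unfolding lth_def .
    from lm_unique[OF mo that(1,2) this] show ?thesis unfolding lth_def .
  qed
  have hdeg_keys: "snd k = hdeg g" if gk0: "g \<in> G" "k \<in> Poly_Mapping.keys g" for g k
  proof -
    obtain d where d: "\<forall>m\<in>Poly_Mapping.keys g. snd m = d" using G_hom gk0(1) unfolding homogeneous_def by blast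
    have "\<forall>m\<in>Poly_Mapping.keys g. snd m = hdeg g" unfolding hdeg_def by (rule someI[of _ d]) (rule d)
    thus ?thesis using gk0(2) by blast
  qed
  define tt where "tt m = (THE t. t \<in> SMh M \<and> t + lm lth (assoc m) = m \<and>
                    sdeg M (mon t :: _ \<Rightarrow>\<^sub>0 'k) + sdeg M (mon (lm lth (assoc m)) :: _ \<Rightarrow>\<^sub>0 'k)
                      = sdeg M (mon m :: _ \<Rightarrow>\<^sub>0 'k))" for m
  define r where "r m = (mon (tt m) :: _ \<Rightarrow>\<^sub>0 'k) * assoc m" for m
  have R_eq: "R = r ` N" unfolding R_def Setcompr_eq_image r_def tt_def by (rule refl)
  have Rf: "tt m \<in> SMh M" "tt m + lm lth (assoc m) = m"
    "adeg M (fst (tt m)) + adeg M (fst (lm lth (assoc m))) = adeg M (fst m)"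
    "Poly_Mapping.keys (r m) \<subseteq> set cols"
    "Poly_Mapping.lookup (r m) m \<noteq> 0"
    "\<And>x. x \<in> Poly_Mapping.keys (r m) \<Longrightarrow> x \<noteq> m \<Longrightarrow> lth x m"
    "r m \<in> Ih" "r m \<in> Mrows"
    if mN: "m \<in> N" for m
  proof -
    have m1: "m \<in> SMh M" "snd m = int D" using mN unfolding N_def mons_deg_def by auto
    have g: "assoc m \<in> G" "assoc m \<noteq> 0" "ddvd M TYPE('k) (lm lth (assoc m)) m" using assoc mN by auto
    define L where "L = lm lth (assoc m)"
    have gI: "assoc m \<in> Ih" using g GI by blast
    have gk: "Poly_Mapping.keys (assoc m) \<subseteq> SMh M" using Ih_keys[OF gI] .
    note LP = Lprop[OF gk g(2), folded L_def]
    obtain c where c: "c \<in> SMh M" "L + c = m"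
      "sdeg M (mon L :: _ \<Rightarrow>\<^sub>0 'k) + sdeg M (mon c :: _ \<Rightarrow>\<^sub>0 'k) = sdeg M (mon m :: _ \<Rightarrow>\<^sub>0 'k)"
      using g(3) unfolding ddvd_def L_def by blast
    have ttc: "tt m = c" unfolding tt_def L_def[symmetric]
    proof (rule the_equality)
      show "c \<in> SMh M \<and> c + L = m \<and> sdeg M (mon c :: _ \<Rightarrow>\<^sub>0 'k) + sdeg M (mon L :: _ \<Rightarrow>\<^sub>0 'k) = sdeg M (mon m :: _ \<Rightarrow>\<^sub>0 'k)"
        using c by (simp add: add.commute)
      fix t assume "t \<in> SMh M \<and> t + L = m \<and> sdeg M (mon t :: _ \<Rightarrow>\<^sub>0 'k) + sdeg M (mon L :: _ \<Rightarrow>\<^sub>0 'k) = sdeg M (mon m :: _ \<Rightarrow>\<^sub>0 'k)"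
      hence "t + L = L + c" using c by simp
      thus "t = c" by (simp add: add.commute)
    qed
    show t1: "tt m \<in> SMh M" using ttc c by simp
    show t2: "tt m + lm lth (assoc m) = m" using ttc c by (simp add: add.commute L_def)
    have dg: "adeg M (fst (tt m)) + adeg M (fst L) = adeg M (fst m)"
      using c(3) ttc unfolding sdeg_mon by simp
    thus "adeg M (fst (tt m)) + adeg M (fst (lm lth (assoc m))) = adeg M (fst m)" unfolding L_def .
    have rk: "Poly_Mapping.keys (r m) \<subseteq> (\<lambda>k. tt m + k) ` Poly_Mapping.keys (assoc m)"
      unfolding r_def mon_def by (rule keys_single_mult)
    have rl: "Poly_Mapping.lookup (r m) (tt m + k) = Poly_Mapping.lookup (assoc m) k" for k
      unfolding r_def mon_def lookup_single_mult by simp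
    have sndL: "snd L = hdeg (assoc m)" using hdeg_keys[OF g(1) LP(1)] .
    have e: "snd (tt m) + snd L = snd m" using arg_cong[OF t2, of snd] unfolding L_def by simp
    have sndt: "snd (tt m) + hdeg (assoc m) = int D" using e m1(2) sndL by simp
    show "Poly_Mapping.keys (r m) \<subseteq> set cols"
    proof
      fix x assume "x \<in> Poly_Mapping.keys (r m)"
      then obtain k where k: "k \<in> Poly_Mapping.keys (assoc m)" "x = tt m + k" using rk by blast
      have "x \<in> SMh M" unfolding k(2) by (rule SMh_add[OF t1]) (use gk k in blast)
      moreover have "snd x = int D" using k sndt hdeg_keys[OF g(1) k(1)] by simp
      ultimately show "x \<in> set cols" using colsD by blast
    qed
    show "Poly_Mapping.lookup (r m) m \<noteq> 0"
      using rl[of L] t2 LP(1) unfolding L_def by (simp add: in_keys_iff)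
    show "lth x m" if x: "x \<in> Poly_Mapping.keys (r m)" "x \<noteq> m" for x
    proof -
      obtain k where k: "k \<in> Poly_Mapping.keys (assoc m)" "x = tt m + k" using rk x(1) by blast
      have kL: "k \<noteq> L" using x(2) k(2) t2 unfolding L_def by auto
      have "lth k L" using LP(2)[OF k(1) kL] .
      hence kL': "gsparse_less M lt k L" unfolding lth_def .
      have sk: "snd k = snd L" using hdeg_keys[OF g(1) k(1)] sndL by simp
      have kS: "k \<in> SMh M" using gk k(1) by blast
      have LS: "L \<in> SMh M" using gk LP(1) by blast
      have dg': "adeg M (fst (tt m)) + adeg M (fst L) = adeg M (fst (tt m + L))"
        using dg t2 unfolding L_def by simp
      have "gsparse_less M lt (tt m + k) (tt m + L)"
        by (rule lth_shift[OF mo t1 kS LS sk kL' dg'])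
      thus "lth x m" using k(2) t2 unfolding lth_def L_def by simp
    qed
    show rI: "r m \<in> Ih" unfolding r_def using Ih_mul[OF gI mon_salg[OF t1]] .
    have "tt m \<in> mons_deg M (int D - hdeg (assoc m))" unfolding mons_deg_def using t1 sndt by simp
    thus "r m \<in> Mrows" unfolding Mrows_def r_def using g(1) by blast
  qed
  have Rlm: "lm lth (r m) = m" if "m \<in> N" for m
  proof (rule Luniq)
    show "Poly_Mapping.keys (r m) \<subseteq> SMh M" using Rf(4)[OF that] colsSMh by blast
    show "m \<in> Poly_Mapping.keys (r m)" using Rf(5)[OF that] by (simp add: in_keys_iff)
  qed (use Rf(6)[OF that] in blast)
  have Rz: "Poly_Mapping.lookup (r m) x = 0" if "m \<in> N" "x \<in> SMh M" "lth m x" for m x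
  proof (rule ccontr)
    assume "Poly_Mapping.lookup (r m) x \<noteq> 0"
    hence xk: "x \<in> Poly_Mapping.keys (r m)" by (simp add: in_keys_iff)
    have mS: "m \<in> SMh M" using that(1) unfolding N_def mons_deg_def by auto
    have "x \<noteq> m" using that(3) asym[OF that(3) mS that(2)] by auto
    hence "lth x m" using Rf(6)[OF that(1) xk] by blast
    thus False using asym[OF that(3) mS that(2)] by simp
  qed
  have NC: "N \<subseteq> set cols" unfolding N_def using cols(2) by blast
  have Mrows_prop: "Poly_Mapping.keys x \<subseteq> set cols \<and> x \<in> Ih" if xM: "x \<in> Mrows" for x
  proof -
    obtain u g where ug: "x = mon u * g" "g \<in> G" "u \<in> mons_deg M (int D - hdeg g)"
      using xM unfolding Mrows_def by blast
    have gI: "g \<in> Ih" using ug(2) GI by blast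
    have uS: "u \<in> SMh M" "snd u = int D - hdeg g" using ug(3) unfolding mons_deg_def by auto
    have "Poly_Mapping.keys x \<subseteq> set cols"
    proof
      fix y assume "y \<in> Poly_Mapping.keys x"
      then obtain k where k: "k \<in> Poly_Mapping.keys g" "y = u + k"
        using keys_single_mult[of u 1 g] ug(1) unfolding mon_def by blast
      have "y \<in> SMh M" unfolding k(2) by (rule SMh_add[OF uS(1)]) (use Ih_keys[OF gI] k in blast)
      moreover have "snd y = int D" using k uS(2) hdeg_keys[OF ug(2) k(1)] by simp
      ultimately show "y \<in> set cols" using colsD by blast
    qed
    moreover have "x \<in> Ih" unfolding ug(1) by (rule Ih_mul[OF gI mon_salg[OF uS(1)]])
    ultimately show ?thesis by blast
  qed
  have red: "f \<in> LC rs" if rsR: "set rs = R" and fI: "f \<in> Ih" and fk: "Poly_Mapping.keys f \<subseteq> set cols" for rs f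
  proof -
    have "\<forall>f. f \<in> Ih \<longrightarrow> Poly_Mapping.keys f \<subseteq> set cols \<longrightarrow> (\<forall>j < ?n - k. Poly_Mapping.lookup f (cols ! j) = 0) \<longrightarrow> f \<in> LC rs" for k
    proof (induction k)
      case 0
      show ?case
      proof (intro allI impI)
        fix f assume f: "f \<in> Ih" "Poly_Mapping.keys f \<subseteq> set cols" "\<forall>j < ?n - 0. Poly_Mapping.lookup f (cols ! j) = 0"
        have "f = 0"
        proof (rule poly_mapping_eqI)
          fix x
          show "Poly_Mapping.lookup f x = Poly_Mapping.lookup 0 x"
          proof (cases "x \<in> set cols")
            case True
            then obtain j where "j < ?n" "x = cols ! j" by (metis in_set_conv_nth)
            thus ?thesis using f(3) by simp
          next
            case False thus ?thesis using f(2) by (auto simp: in_keys_iff)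
          qed
        qed
        thus "f \<in> LC rs" using LC_zero by simp
      qed
    next
      case (Suc k)
      show ?case
      proof (intro allI impI)
        fix f assume f: "f \<in> Ih" "Poly_Mapping.keys f \<subseteq> set cols" "\<forall>j < ?n - Suc k. Poly_Mapping.lookup f (cols ! j) = 0"
        show "f \<in> LC rs"
        proof (cases "?n \<le> k")
          case True
          hence "?n - Suc k = ?n - k" by simp
          thus ?thesis using Suc.IH f by simp
        next
          case False
          define i where "i = ?n - Suc k"
          have i: "i < ?n" "?n - k = Suc i" using False unfolding i_def by auto
          show ?thesis
          proof (cases "Poly_Mapping.lookup f (cols ! i) = 0")
            case True
            have "\<forall>j < ?n - k. Poly_Mapping.lookup f (cols ! j) = 0"
              using f(3) True unfolding i(2) i_def[symmetric] using less_Suc_eq by auto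
            thus ?thesis using Suc.IH f(1,2) by blast
          next
            case False
            define m where "m = cols ! i"
            have mc: "m \<in> set cols" unfolding m_def using i(1) by simp
            have fS: "Poly_Mapping.keys f \<subseteq> SMh M" using f(2) colsSMh by blast
            have mk: "m \<in> Poly_Mapping.keys f" using False unfolding m_def by (simp add: in_keys_iff)
            have lmf: "lm lth f = m"
            proof (rule Luniq[OF fS mk])
              fix m' assume m': "m' \<in> Poly_Mapping.keys f" "m' \<noteq> m"
              then obtain j where j: "j < ?n" "m' = cols ! j" using f(2) by (metis in_set_conv_nth subsetD)
              have "j \<noteq> i" using m' j unfolding m_def by auto
              moreover have "\<not> j < i" using f(3) m'(1) j unfolding i_def[symmetric] by (auto simp: in_keys_iff)
              ultimately have "i < j" by simp
              thus "lth m' m" using srt[OF _ j(1)] j(2) unfolding m_def by simp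
            qed
            have fnz: "f \<noteq> 0" using mk by auto
            obtain g where g: "g \<in> G" "g \<noteq> 0" "ddvd M TYPE('k) (lm lth g) m"
              using GBlm[OF f(1) fnz] lmf by auto
            have mN: "m \<in> N" unfolding N_def using mc cols(2) g by blast
            note RF = Rf[OF mN]
            define c where "c = Poly_Mapping.lookup f m / Poly_Mapping.lookup (r m) m"
            define f' where "f' = f + sc (- c) (r m)"
            have f'I: "f' \<in> Ih" unfolding f'_def by (rule Ih_add[OF f(1) sc_Ih[OF RF(7)]])
            have f'k: "Poly_Mapping.keys f' \<subseteq> set cols"
              unfolding f'_def using keys_add[of f "sc (- c) (r m)"] keys_sc[of "- c" "r m"] f(2) RF(4) by blast
            have f'z: "\<forall>j < ?n - k. Poly_Mapping.lookup f' (cols ! j) = 0"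
            proof (intro allI impI)
              fix j assume "j < ?n - k"
              hence j: "j \<le> i" using i by simp
              show "Poly_Mapping.lookup f' (cols ! j) = 0"
              proof (cases "j = i")
                case True
                hence cj: "cols ! j = m" unfolding m_def by simp
                show ?thesis unfolding f'_def c_def lookup_add lookup_sc cj using RF(5) by simp
              next
                case False
                hence ji: "j < i" using j by simp
                have jn: "j < ?n" using ji i by simp
                have z1: "Poly_Mapping.lookup f (cols ! j) = 0" using f(3) ji unfolding i_def by simp
                have "lth m (cols ! j)" using srt[OF ji i(1)] unfolding m_def .
                hence z2: "Poly_Mapping.lookup (r m) (cols ! j) = 0"
                  using Rz[OF mN colsSMh[OF nth_mem[OF jn]]] by simp
                show ?thesis unfolding f'_def lookup_add lookup_sc z1 z2 by simp
              qed
            qed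
            have "f' \<in> LC rs" using Suc.IH f'I f'k f'z by blast
            moreover have "r m \<in> LC rs" using LC_set[of "r m" rs] rsR R_eq mN by blast
            hence "sc c (r m) \<in> LC rs" by (rule LC_sc)
            ultimately have "f' + sc c (r m) \<in> LC rs" by (rule LC_add)
            moreover have "f' + sc c (r m) = f"
              unfolding f'_def add.assoc sc_add_left[symmetric] by (simp add: sc_zero)
            ultimately show ?thesis by simp
          qed
        qed
      qed
    qed
    from this[of ?n] fI fk show ?thesis by simp
  qed
  have Rkeys: "Poly_Mapping.keys x \<subseteq> set cols" if "x \<in> R" for x
    using that Rf(4) unfolding R_eq by blast
  have RM: "R \<subseteq> Mrows" using Rf(8) unfolding R_eq by blast
  have part1: "Rows cols (rref (macaulay cols rs)) = Rows cols (rref (macaulay cols ms))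
            \<and> full_rank (macaulay cols rs)"
    if H: "distinct rs" "set rs = R" "distinct ms" "set ms = Mrows" for rs ms
  proof
    define A where "A = macaulay cols rs"
    define B where "B = macaulay cols ms"
    have Ac: "A \<in> carrier_mat (length rs) ?n" unfolding A_def macaulay_def by simp
    have Bc: "B \<in> carrier_mat (length ms) ?n" unfolding B_def macaulay_def by simp
    have LCeq: "LC rs = LC ms"
    proof
      show "LC rs \<subseteq> LC ms" by (rule LC_sub) (use H RM LC_set in blast)
      show "LC ms \<subseteq> LC rs"
      proof (rule LC_sub)
        fix x assume "x \<in> set ms"
        hence "x \<in> Mrows" using H by simp
        thus "x \<in> LC rs" using red[OF H(2)] Mrows_prop by blast
      qed
    qed
    have vA: "vp cols ` rsp A = LC rs" unfolding A_def
      by (rule vp_rsp[OF cols(1)]) (use Rkeys H in blast)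
    have vB: "vp cols ` rsp B = LC ms" unfolding B_def
      by (rule vp_rsp[OF cols(1)]) (use Mrows_prop H in blast)
    have sA: "rsp A \<subseteq> carrier_vec ?n" using rsp_carrier[of A] Ac by simp
    have sB: "rsp B \<subseteq> carrier_vec ?n" using rsp_carrier[of B] Bc by simp
    have "rsp A = rsp B"
      using inj_on_image_eq_iff[OF vp_inj[OF cols(1)] sA sB] vA vB LCeq by simp
    hence NZe: "NZ (rref A) = NZ (rref B)" by (rule rref_NZ_eq[OF Ac Bc])
    have dA: "dim_col (rref A) = ?n" using rref_props(1)[OF Ac] by simp
    have dB: "dim_col (rref B) = ?n" using rref_props(1)[OF Bc] by simp
    show "Rows cols (rref (macaulay cols rs)) = Rows cols (rref (macaulay cols ms))"
      unfolding A_def[symmetric] B_def[symmetric] Rows_vp[OF dA] Rows_vp[OF dB] NZe ..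
    show "full_rank (macaulay cols rs)"
      unfolding full_rank_def
    proof (rule disjI1)
      show "rows_indep (macaulay cols rs)" unfolding rows_indep_def A_def[symmetric]
      proof (intro allI impI)
        fix c i
        assume sum0: "\<forall>j<dim_col A. (\<Sum>i<dim_row A. c i * A $$ (i, j)) = 0" and i: "i < dim_row A"
        have dr: "dim_row A = length rs" "dim_col A = ?n" using Ac by auto
        have rsN: "\<exists>m\<in>N. rs ! l = r m" if "l < length rs" for l
          using nth_mem[OF that] H(2) R_eq by auto
        define mu where "mu l = (SOME m. m \<in> N \<and> rs ! l = r m)" for l
        have mu: "mu l \<in> N" "rs ! l = r (mu l)" if "l < length rs" for l
          using someI_ex[OF rsN[OF that, unfolded Bex_def]] unfolding mu_def by auto
        have muc: "\<exists>j < ?n. cols ! j = mu l" if "l < length rs" for l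
          using mu(1)[OF that] NC by (metis in_set_conv_nth subsetD)
        define p where "p l = (SOME j. j < ?n \<and> cols ! j = mu l)" for l
        have p: "p l < ?n" "cols ! p l = mu l" if "l < length rs" for l
          using someI_ex[OF muc[OF that]] unfolding p_def by auto
        show "c i = 0"
        proof (rule ccontr)
          assume ci: "c i \<noteq> 0"
          define S where "S = {l. l < length rs \<and> c l \<noteq> 0}"
          have finS: "finite S" unfolding S_def by simp
          have neS: "S \<noteq> {}" using ci i dr unfolding S_def by auto
          define q where "q = Min (p ` S)"
          have "q \<in> p ` S" unfolding q_def using finS neS by simp
          then obtain l0 where l0: "l0 \<in> S" "p l0 = q" by auto
          have l0min: "p l0 \<le> p l" if "l \<in> S" for l
            using l0(2) finS that unfolding q_def by auto
          have l0': "l0 < length rs" "c l0 \<noteq> 0" using l0(1) unfolding S_def by auto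
          have jn: "p l0 < ?n" using p(1)[OF l0'(1)] .
          have term0: "c l * A $$ (l, p l0) = 0" if l: "l < length rs" "l \<noteq> l0" for l
          proof (cases "c l = 0")
            case True thus ?thesis by simp
          next
            case False
            hence lS: "l \<in> S" using l unfolding S_def by simp
            have "rs ! l \<noteq> rs ! l0" using H(1) l l0'(1) by (simp add: nth_eq_iff_index_eq)
            hence "mu l \<noteq> mu l0" using mu(2)[OF l(1)] mu(2)[OF l0'(1)] by metis
            hence "p l \<noteq> p l0" using p(2)[OF l(1)] p(2)[OF l0'(1)] by metis
            hence lt0: "p l0 < p l" using l0min[OF lS] by simp
            have "lth (mu l) (mu l0)" using srt[OF lt0 p(1)[OF l(1)]] p(2) l l0'(1) by simp
            hence "Poly_Mapping.lookup (r (mu l)) (mu l0) = 0"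
              using Rz[OF mu(1)[OF l(1)]] NC mu(1)[OF l0'(1)] colsSMh
              by (meson lth_def subsetD)
            moreover have "A $$ (l, p l0) = Poly_Mapping.lookup (rs ! l) (cols ! p l0)"
              unfolding A_def macaulay_def using l(1) jn by simp
            ultimately show ?thesis using mu(2)[OF l(1)] p(2)[OF l0'(1)] by simp
          qed
          have "(\<Sum>l<dim_row A. c l * A $$ (l, p l0)) = (\<Sum>l<length rs. if l = l0 then c l0 * A $$ (l0, p l0) else 0)"
            unfolding dr by (rule sum.cong) (use term0 in auto)
          also have "... = c l0 * A $$ (l0, p l0)" using l0'(1) by simp
          also have "A $$ (l0, p l0) = Poly_Mapping.lookup (r (mu l0)) (mu l0)"
            unfolding A_def macaulay_def using l0'(1) jn mu(2)[OF l0'(1)] p(2)[OF l0'(1)] by simp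
          finally have "(\<Sum>l<dim_row A. c l * A $$ (l, p l0)) \<noteq> 0"
            using l0'(2) Rf(5)[OF mu(1)[OF l0'(1)]] by simp
          thus False using sum0 jn dr by simp
        qed
      qed
    qed
  qed
  have part2: "\<exists>rs. distinct rs \<and> set rs = R \<and> ref (macaulay cols rs)"
  proof -
    define js where "js = filter (\<lambda>j. cols ! j \<in> N) [0..<?n]"
    define rs where "rs = map (\<lambda>j. r (cols ! j)) js"
    have sjs: "set js = {j. j < ?n \<and> cols ! j \<in> N}" unfolding js_def by auto
    have injr: "inj_on (\<lambda>j. r (cols ! j)) (set js)"
    proof (rule inj_onI)
      fix a b assume ab: "a \<in> set js" "b \<in> set js" "r (cols ! a) = r (cols ! b)"
      have aN: "cols ! a \<in> N" "a < ?n" using ab(1) sjs by blast+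
      have bN: "cols ! b \<in> N" "b < ?n" using ab(2) sjs by blast+
      have "cols ! a = cols ! b" using Rlm[OF aN(1)] Rlm[OF bN(1)] ab(3) by metis
      thus "a = b" using aN(2) bN(2) cols(1) by (simp add: nth_eq_iff_index_eq)
    qed
    have d: "distinct rs" unfolding rs_def distinct_map using injr by (simp add: js_def)
    have cN: "(\<lambda>j. cols ! j) ` set js = N"
    proof
      show "(\<lambda>j. cols ! j) ` set js \<subseteq> N" using sjs by blast
      show "N \<subseteq> (\<lambda>j. cols ! j) ` set js"
      proof
        fix m assume mN: "m \<in> N"
        then obtain j where j: "j < ?n" "m = cols ! j" using NC by (metis in_set_conv_nth subsetD)
        hence "j \<in> set js" using sjs mN by blast
        thus "m \<in> (\<lambda>j. cols ! j) ` set js" using j(2) by blast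
      qed
    qed
    have "set rs = (\<lambda>j. r (cols ! j)) ` set js" unfolding rs_def by (rule set_map)
    also have "... = r ` ((\<lambda>j. cols ! j) ` set js)" by (rule image_image[symmetric])
    finally have srs: "set rs = R" unfolding cN R_eq .
    have ss: "sorted_wrt (<) js" unfolding js_def
      by (rule sorted_wrt_filter) (simp add: sorted_wrt_upt)
    have "ref (macaulay cols rs)" unfolding ref_def
    proof (intro exI[of _ "\<lambda>i. js ! i"] allI impI conjI)
      fix i assume "i < dim_row (macaulay cols rs)"
      hence i: "i < length js" unfolding macaulay_def rs_def by simp
      have ji: "js ! i \<in> set js" using i by simp
      hence jn: "js ! i < ?n" and jN: "cols ! (js ! i) \<in> N" using sjs by auto
      have dc: "dim_col (macaulay cols rs) = ?n" unfolding macaulay_def by simp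
      have ent: "macaulay cols rs $$ (i, j) = Poly_Mapping.lookup (r (cols ! (js ! i))) (cols ! j)" if "j < ?n" for j
        unfolding macaulay_def rs_def using i that by simp
      show "js ! i \<le> dim_col (macaulay cols rs)" using jn dc by simp
      show "macaulay cols rs $$ (i, j) = 0" if "j < js ! i" for j
      proof -
        have jn': "j < ?n" using that jn by simp
        have "lth (cols ! (js ! i)) (cols ! j)" by (rule srt[OF that jn])
        thus ?thesis unfolding ent[OF jn'] using Rz[OF jN colsSMh[OF nth_mem[OF jn']]] by simp
      qed
      show "js ! i < dim_col (macaulay cols rs) \<Longrightarrow> macaulay cols rs $$ (i, js ! i) \<noteq> 0"
        unfolding ent[OF jn] using Rf(5)[OF jN] by simp
      show "Suc i < dim_row (macaulay cols rs) \<Longrightarrow>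
         js ! i < js ! Suc i \<or> js ! Suc i = dim_col (macaulay cols rs)"
        using sorted_wrt_nth_less[OF ss, of i "Suc i"] unfolding macaulay_def rs_def by simp
    qed
    thus ?thesis using d srs by blast
  qed
  show ?thesis using part1 part2 by blast
qed

end
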